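(* Let $K,N\ge 1$, $T\ge1$, let $c_1^M,\dots,c_K^M>0$ with $C^M=\sum_kc_k^M$, and let $\mathcal{F}_c=\{c\in\mathbb{R}^N: c\ge 0,\ \sum_{i=1}^Nc_i\le C^M\}$. For each round $t=1,\dots,T$ let (possibly adversarially chosen) data $r_1(t)<\dots<r_K(t)$ with $0\le r_k(t)\le r_{\max}$, prices $0\le p_i(t)<p_{\max}$, and deployment ratios $\epsilon(t)\in[0,1]^N$ be given, and define for $c\in\mathcal{F}_c$ $$\mathrm{cost}_t(c)=\sum_{k<k_c}(r_k(t)-r_{k_c}(t))c_k^M+\sum_{i=1}^Nc_i\big(r_{k_c}(t)\epsilon_i(t)-p_i(t)\big),$$ where $k_c=\min\{q:\sum_i\epsilon_i(t)c_i\le\sum_{k=1}^qc_k^M\}$. Let $D=C^M$ if $N=1$ and $D=\sqrt2\,C^M$ if $N\ge2$, and $G=\sqrt N\max\{r_{\max},p_{\max}\}$. Run online projected subgradient descent: $c(1)\in\mathcal{F}_c$ arbitrary and $c(t+1)=\mathrm{proj}_{\mathcal{F}_c}\big(c(t)-\eta_t g_t\big)$ with $g_t=\big(r_{k_c}(t)\epsilon_i(t)-p_i(t)\big)_{i=1}^N$ (the critical type $k_c$ evaluated at $c(t)$), $\eta_t=\frac{D}{G\sqrt t}$, where $\mathrm{proj}_{\mathcal{F}_c}$ is Euclidean projection and $c(t)$ is chosen before round-$t$ data are revealed. Then the regret $$R_T=\sum_{t=1}^T\mathrm{cost}_t(c(t))-\min_{c\in\mathcal{F}_c}\sum_{t=1}^T\mathrm{cost}_t(c)$$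 satisfies $R_T\le\frac32GD\sqrt T\le 3C^M\sqrt{\frac{TN}{2}}\max\{r_{\max},p_{\max}\}$.
   Context: Interpretation: a cryptominer with $K$ machine types (capacities $c_k^M$, per-unit net mining rewards $r_k(t)$) chooses each round capacities $c_i(t)$ committed to $N$ ancillary service programs with prices $p_i(t)$ and deployment ratios $\epsilon_i(t)$; $\mathrm{cost}_t$ is its optimal net cost in round $t$, and $g_t$ is a subgradient of $\mathrm{cost}_t$ at $c(t)$. *)

theory Defs
  imports "HOL-Analysis.Analysis"
begin

definition feasible :: "real \<Rightarrow> (real^'n) set" where
  "feasible CM = {c. (\<forall>i. 0 \<le> c $ i) \<and> (\<Sum>i\<in>UNIV. c $ i) \<le> CM}"

definition crit :: "(nat \<Rightarrow> real) \<Rightarrow> real^'n \<Rightarrow> real^'n \<Rightarrow> nat" where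
  "crit cM eps c = (LEAST q. 1 \<le> q \<and> (\<Sum>i\<in>UNIV. eps $ i * c $ i) \<le> (\<Sum>k=1..q. cM k))"

definition cost :: "(nat \<Rightarrow> real) \<Rightarrow> (nat \<Rightarrow> real) \<Rightarrow> real^'n \<Rightarrow> real^'n \<Rightarrow> real^'n \<Rightarrow> real" where
  "cost cM r eps p c =
     (let q = crit cM eps c in
        (\<Sum>k\<in>{1..<q}. (r k - r q) * cM k) + (\<Sum>i\<in>UNIV. c $ i * (r q * eps $ i - p $ i)))"

definition subgrad :: "(nat \<Rightarrow> real) \<Rightarrow> (nat \<Rightarrow> real) \<Rightarrow> real^'n \<Rightarrow> real^'n \<Rightarrow> real^'n \<Rightarrow> real^'n" where
  "subgrad cM r eps p c = (\<chi> i. r (crit cM eps c) * eps $ i - p $ i)"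

end

theory Submission
  imports Defs
begin


lemma feasible_closed: "closed (feasible CM :: (real^'n) set)"
proof -
  have "feasible CM = (\<Inter>i. {c::real^'n. 0 \<le> c $ i}) \<inter> {c. (\<Sum>i\<in>UNIV. c $ i) \<le> CM}"
    by (auto simp: feasible_def)
  moreover have "closed {c::real^'n. (\<Sum>i\<in>UNIV. c $ i) \<le> CM}"
    by (intro closed_Collect_le continuous_intros)
  moreover have "closed {c::real^'n. 0 \<le> c $ i}" for i
    by (intro closed_Collect_le continuous_intros)
  ultimately show ?thesis by (metis closed_Int closed_INT)
qed

lemma feasible_convex: "convex (feasible CM :: (real^'n) set)"
proof (rule convexI)
  fix x y :: "real^'n" and u v :: real
  assume x: "x \<in> feasible CM" and y: "y \<in> feasible CM" and u: "0 \<le> u" and v: "0 \<le> v" and uv: "u + v = 1"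
  have xn: "\<forall>i. 0 \<le> x $ i" and xs: "(\<Sum>i\<in>UNIV. x $ i) \<le> CM" using x by (auto simp: feasible_def)
  have yn: "\<forall>i. 0 \<le> y $ i" and ys: "(\<Sum>i\<in>UNIV. y $ i) \<le> CM" using y by (auto simp: feasible_def)
  have c1: "\<forall>i. 0 \<le> (u *\<^sub>R x + v *\<^sub>R y) $ i"
  proof
    fix i
    have "0 \<le> u * x $ i" using u xn by simp
    moreover have "0 \<le> v * y $ i" using v yn by simp
    ultimately show "0 \<le> (u *\<^sub>R x + v *\<^sub>R y) $ i" by simp
  qed
  have "(\<Sum>i\<in>UNIV. (u *\<^sub>R x + v *\<^sub>R y) $ i) = u * (\<Sum>i\<in>UNIV. x $ i) + v * (\<Sum>i\<in>UNIV. y $ i)"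
    by (simp add: sum.distrib sum_distrib_left)
  also have "\<dots> \<le> u * CM + v * CM" by (rule add_mono[OF mult_left_mono[OF xs u] mult_left_mono[OF ys v]])
  also have "\<dots> = (u + v) * CM" by (simp only: distrib_right)
  also have "\<dots> = CM" using uv by simp
  finally have c2: "(\<Sum>i\<in>UNIV. (u *\<^sub>R x + v *\<^sub>R y) $ i) \<le> CM" .
  show "u *\<^sub>R x + v *\<^sub>R y \<in> feasible CM" unfolding feasible_def using c1 c2 by simp
qed

lemma crit_props:
  fixes eps x :: "real^'n"
  assumes K: "K \<ge> 1" and s: "(\<Sum>i\<in>UNIV. eps $ i * x $ i) \<le> (\<Sum>k=1..K. cM k)"
  defines "q \<equiv> crit cM eps x"
  shows "1 \<le> q" "q \<le> K" "(\<Sum>i\<in>UNIV. eps $ i * x $ i) \<le> (\<Sum>k=1..q. cM k)"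
    "q > 1 \<Longrightarrow> (\<Sum>k=1..q-1. cM k) < (\<Sum>i\<in>UNIV. eps $ i * x $ i)"
proof -
  let ?P = "\<lambda>q. 1 \<le> q \<and> (\<Sum>i\<in>UNIV. eps $ i * x $ i) \<le> (\<Sum>k=1..q. cM k)"
  have PK: "?P K" using K s by simp
  have Pq: "?P q" unfolding q_def crit_def by (rule LeastI[of ?P, OF PK])
  then show "1 \<le> q" "(\<Sum>i\<in>UNIV. eps $ i * x $ i) \<le> (\<Sum>k=1..q. cM k)" by auto
  show "q \<le> K" unfolding q_def crit_def by (rule Least_le[of ?P, OF PK])
  assume "q > 1"
  hence "q - 1 < q" by simp
  hence "\<not> ?P (q - 1)" unfolding q_def crit_def by (rule not_less_Least)
  with \<open>q > 1\<close> show "(\<Sum>k=1..q-1. cM k) < (\<Sum>i\<in>UNIV. eps $ i * x $ i)" by auto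
qed

definition hh :: "(nat \<Rightarrow> real) \<Rightarrow> (nat \<Rightarrow> real) \<Rightarrow> nat \<Rightarrow> real \<Rightarrow> real" where
  "hh cM r j s = (\<Sum>k\<in>{1..<j}. (r k - r j) * cM k) + r j * s"

lemma hh_step:
  assumes "1 \<le> j"
  shows "hh cM r (Suc j) s - hh cM r j s = (r (Suc j) - r j) * (s - (\<Sum>k=1..j. cM k))"
proof -
  have e: "(\<Sum>k\<in>{1..<j}. (r k - a) * cM k) = (\<Sum>k\<in>{1..<j}. r k * cM k) - a * (\<Sum>k\<in>{1..<j}. cM k)" for a
    by (simp add: sum_subtractf sum_distrib_left algebra_simps)
  have s1: "(\<Sum>k=1..j. cM k) = (\<Sum>k\<in>{1..<j}. cM k) + cM j"
    using assms by (simp add: atLeastLessThanSuc_atLeastAtMost[symmetric] sum.atLeastLessThan_Suc)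
  show ?thesis
    by (simp only: hh_def sum.atLeastLessThan_Suc[OF assms] e s1) (simp add: algebra_simps)
qed

lemma S_mono:
  fixes a b K :: nat
  assumes "\<forall>k\<in>{1..K}. cM k > (0::real)" "a \<le> b" "b \<le> K"
  shows "(\<Sum>k=1..a. cM k) \<le> (\<Sum>k=1..b. cM k)"
proof (rule sum_mono2)
  show "finite {1..b}" by simp
  show "{1..a} \<subseteq> {1..b}" using assms by auto
  fix k assume "k \<in> {1..b} - {1..a}"
  hence "k \<in> {1..K}" using assms by auto
  thus "0 \<le> cM k" using assms(1) by (meson less_imp_le)
qed

lemma hh_max:
  fixes q j K :: nat
  assumes cMpos: "\<forall>k\<in>{1..K}. cM k > (0::real)"
    and r_mono: "\<forall>k j. 1 \<le> k \<and> k < j \<and> j \<le> K \<longrightarrow> r k < r j"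
    and q1: "1 \<le> q" and qK: "q \<le> K" and sq: "s \<le> (\<Sum>k=1..q. cM k)"
    and sq': "q > 1 \<Longrightarrow> (\<Sum>k=1..q-1. cM k) < s"
    and j1: "1 \<le> j" and jK: "j \<le> K"
  shows "hh cM r j s \<le> hh cM r q s"
proof (cases "j \<le> q")
  case True
  show ?thesis using True
  proof (induction q rule: dec_induct)
    case base then show ?case by simp
  next
    case (step n)
    have "n \<ge> 1" using j1 step by simp
    have "r n < r (Suc n)" using r_mono \<open>n \<ge> 1\<close> step qK by auto
    have "(\<Sum>k=1..n. cM k) \<le> (\<Sum>k=1..q-1. cM k)" using S_mono[OF cMpos, of n "q-1"] step qK by simp
    moreover have "q > 1" using step \<open>n \<ge> 1\<close> by simp
    ultimately have "(\<Sum>k=1..n. cM k) < s" using sq' by simp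
    hence "0 \<le> hh cM r (Suc n) s - hh cM r n s"
      using hh_step[OF \<open>n \<ge> 1\<close>, of cM r s] \<open>r n < r (Suc n)\<close> by simp
    then show ?case using step by simp
  qed
next
  case False
  hence "q \<le> j" by simp
  then show ?thesis
  proof (induction j rule: dec_induct)
    case base then show ?case by simp
  next
    case (step n)
    have "n \<ge> 1" using q1 step by simp
    have "r n < r (Suc n)" using r_mono \<open>n \<ge> 1\<close> step jK by auto
    have "(\<Sum>k=1..q. cM k) \<le> (\<Sum>k=1..n. cM k)" using S_mono[OF cMpos, of q n] step jK by simp
    hence "s \<le> (\<Sum>k=1..n. cM k)" using sq by simp
    hence "hh cM r (Suc n) s - hh cM r n s \<le> 0"
      using hh_step[OF \<open>n \<ge> 1\<close>, of cM r s] \<open>r n < r (Suc n)\<close> by (simp add: mult_nonneg_nonpos)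
    then show ?case using step by simp
  qed
qed

lemma cost_hh: "cost cM r eps p x = hh cM r (crit cM eps x) (\<Sum>i\<in>UNIV. eps $ i * x $ i) - (\<Sum>i\<in>UNIV. x $ i * p $ i)"
  unfolding cost_def hh_def Let_def
  by (simp add: algebra_simps sum_subtractf sum_distrib_left)

lemma feas_s:
  fixes x eps :: "real^'n"
  assumes "x \<in> feasible CM" "\<forall>i. 0 \<le> eps $ i \<and> eps $ i \<le> 1"
  shows "(\<Sum>i\<in>UNIV. eps $ i * x $ i) \<le> CM"
proof -
  have "(\<Sum>i\<in>UNIV. eps $ i * x $ i) \<le> (\<Sum>i\<in>UNIV. x $ i)"
    using assms by (intro sum_mono) (auto simp: feasible_def intro: mult_left_le_one_le)
  also have "\<dots> \<le> CM" using assms by (simp add: feasible_def)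
  finally show ?thesis .
qed

lemma subgrad_ineq:
  fixes x y eps p :: "real^'n"
  assumes K: "K \<ge> 1" and cMpos: "\<forall>k\<in>{1..K}. cM k > (0::real)"
    and r_mono: "\<forall>k j. 1 \<le> k \<and> k < j \<and> j \<le> K \<longrightarrow> r k < r j"
    and eps: "\<forall>i. 0 \<le> eps $ i \<and> eps $ i \<le> 1"
    and x: "x \<in> feasible (\<Sum>k=1..K. cM k)" and y: "y \<in> feasible (\<Sum>k=1..K. cM k)"
  shows "cost cM r eps p y + subgrad cM r eps p y \<bullet> (x - y) \<le> cost cM r eps p x"
proof -
  let ?sx = "\<Sum>i\<in>UNIV. eps $ i * x $ i" and ?sy = "\<Sum>i\<in>UNIV. eps $ i * y $ i"
  define q where "q = crit cM eps y"
  define q' where "q' = crit cM eps x"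
  have sx: "?sx \<le> (\<Sum>k=1..K. cM k)" by (rule feas_s[OF x eps])
  have sy: "?sy \<le> (\<Sum>k=1..K. cM k)" by (rule feas_s[OF y eps])
  note cx = crit_props[OF K sx, folded q'_def]
  note cy = crit_props[OF K sy, folded q_def]
  have "hh cM r q ?sx \<le> hh cM r q' ?sx"
    by (rule hh_max[OF cMpos r_mono cx(1,2,3) cx(4) cy(1,2)])
  moreover have "hh cM r q ?sx = hh cM r q ?sy + r q * (?sx - ?sy)"
    unfolding hh_def by (simp add: algebra_simps)
  moreover have "subgrad cM r eps p y \<bullet> (x - y) = r q * (?sx - ?sy) - ((\<Sum>i\<in>UNIV. x $ i * p $ i) - (\<Sum>i\<in>UNIV. y $ i * p $ i))"
    unfolding subgrad_def inner_vec_def q_def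
    by (simp add: algebra_simps sum_subtractf sum_distrib_left sum.distrib)
  ultimately show ?thesis unfolding cost_hh q_def[symmetric] q'_def[symmetric] by simp
qed



lemma tele:
  fixes d e :: "nat \<Rightarrow> real" and T :: nat
  assumes dM: "\<forall>t\<in>{1..T}. d t \<le> M" and e0: "\<forall>t\<in>{1..T}. 0 \<le> e t"
    and de: "\<forall>t. 1 \<le> t \<and> t < T \<longrightarrow> d (Suc t) \<le> e t"
  shows "(\<Sum>t=1..T. sqrt (real t) * (d t - e t)) \<le> M * sqrt (real T)"
proof -
  have "\<forall>n. n \<le> T \<longrightarrow> (\<Sum>t=1..n. sqrt (real t) * (d t - e t)) + sqrt (real n) * e n \<le> M * sqrt (real n)"
  proof (intro allI)
    fix n show "n \<le> T \<longrightarrow> (\<Sum>t=1..n. sqrt (real t) * (d t - e t)) + sqrt (real n) * e n \<le> M * sqrt (real n)"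
    proof (induction n)
      case 0 then show ?case by simp
    next
      case (Suc n)
      show ?case
      proof
        assume sn: "Suc n \<le> T"
        have IH: "(\<Sum>t=1..n. sqrt (real t) * (d t - e t)) + sqrt (real n) * e n \<le> M * sqrt (real n)"
          using Suc sn by simp
        have A: "sqrt (real n) * d (Suc n) \<le> sqrt (real n) * e n"
        proof (cases "n = 0")
          case True then show ?thesis by simp
        next
          case False
          then have "d (Suc n) \<le> e n" using de sn by simp
          then show ?thesis by (intro mult_left_mono) auto
        qed
        have dm: "d (Suc n) \<le> M" using dM sn by simp
        have B0: "(sqrt (real (Suc n)) - sqrt (real n)) * d (Suc n) \<le> (sqrt (real (Suc n)) - sqrt (real n)) * M"
          using dm by (intro mult_left_mono) auto
        have B: "sqrt (real (Suc n)) * d (Suc n) - sqrt (real n) * d (Suc n) \<le> sqrt (real (Suc n)) * M - sqrt (real n) * M"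
          using B0 by (simp add: algebra_simps)
        have S: "(\<Sum>t=1..Suc n. sqrt (real t) * (d t - e t)) = (\<Sum>t=1..n. sqrt (real t) * (d t - e t)) + sqrt (real (Suc n)) * (d (Suc n) - e (Suc n))"
          by simp
        show "(\<Sum>t=1..Suc n. sqrt (real t) * (d t - e t)) + sqrt (real (Suc n)) * e (Suc n) \<le> M * sqrt (real (Suc n))"
          unfolding S using IH A B by (simp add: algebra_simps)
      qed
    qed
  qed
  hence "(\<Sum>t=1..T. sqrt (real t) * (d t - e t)) + sqrt (real T) * e T \<le> M * sqrt (real T)" by simp
  moreover have "0 \<le> sqrt (real T) * e T"
  proof (cases "T = 0")
    case False then show ?thesis using e0 by simp
  qed simp
  ultimately show ?thesis by linarith
qed

lemma inv_sqrt_step: "1 / sqrt (real (Suc n)) \<le> 2 * (sqrt (real (Suc n)) - sqrt (real n))"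
proof -
  define a where "a = sqrt (real n)"
  define b where "b = sqrt (real (Suc n))"
  have b0: "b > 0" unfolding b_def by simp
  have a2: "a * a = real n" unfolding a_def by simp
  have b2: "b * b = real n + 1" unfolding b_def by simp
  have "0 \<le> (a - b) * (a - b)" by simp
  hence "2 * a * b \<le> a * a + b * b" by (simp add: algebra_simps)
  hence "1 \<le> 2 * (b - a) * b" using a2 b2 by (simp add: algebra_simps)
  hence "1 / b \<le> 2 * (b - a)" using b0 by (simp add: field_simps)
  thus ?thesis unfolding a_def b_def .
qed

lemma sum_inv_sqrt: "(\<Sum>t=1..T. 1 / sqrt (real t)) \<le> 2 * sqrt (real T)"
proof (induction T)
  case 0 then show ?case by simp
next
  case (Suc n)
  have "(\<Sum>t=1..Suc n. 1 / sqrt (real t)) = (\<Sum>t=1..n. 1 / sqrt (real t)) + 1 / sqrt (real (Suc n))"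
    by simp
  also have "\<dots> \<le> 2 * sqrt (real n) + 2 * (sqrt (real (Suc n)) - sqrt (real n))"
    using Suc inv_sqrt_step[of n] by linarith
  finally show ?case by simp
qed

lemma p2:
  fixes m CM :: real and n T :: nat
  assumes m0: "0 < m" and CM0: "0 < CM"
  shows "3/2 * (sqrt (real n) * m) * (if n = 1 then CM else sqrt 2 * CM) * sqrt (real T)
     \<le> 3 * CM * sqrt (real T * real n / 2) * m"
proof -
  have r: "sqrt (real T * real n / 2) = sqrt (real T) * sqrt (real n) / sqrt 2"
    by (simp add: real_sqrt_mult real_sqrt_divide)
  have s2: "sqrt 2 * sqrt 2 = (2::real)" by simp
  have s20: "0 < sqrt (2::real)" by simp
  have inv: "3 / sqrt 2 = 3 / 2 * sqrt (2::real)"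
    using s2 s20 by (simp add: field_simps)
  show ?thesis
  proof (cases "n = 1")
    case True
    define X where "X = m * CM * sqrt (real T)"
    have X0: "0 \<le> X" unfolding X_def using m0 CM0 by simp
    have "sqrt 2 \<le> sqrt (4::real)" by (rule real_sqrt_le_mono) simp
    hence "sqrt 2 \<le> (2::real)" by simp
    hence "3/2 \<le> 3/2 * sqrt (2::real)" by simp
    hence "3/2 * X \<le> 3/2 * sqrt 2 * X" using X0 by (intro mult_right_mono) auto
    also have "3/2 * sqrt 2 * X = 3 / sqrt 2 * X" by (simp only: inv)
    finally have "3/2 * X \<le> 3 / sqrt 2 * X" .
    moreover have "3/2 * (sqrt (real n) * m) * (if n = 1 then CM else sqrt 2 * CM) * sqrt (real T) = 3/2 * X"
      using True unfolding X_def by simp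
    moreover have "3 * CM * sqrt (real T * real n / 2) * m = 3 / sqrt 2 * X"
      using True unfolding X_def r by simp
    ultimately show ?thesis by linarith
  next
    case False
    define X where "X = sqrt (real n) * m * CM * sqrt (real T)"
    have "3/2 * (sqrt (real n) * m) * (if n = 1 then CM else sqrt 2 * CM) * sqrt (real T) = 3/2 * sqrt 2 * X"
      using False unfolding X_def by simp
    moreover have "3 * CM * sqrt (real T * real n / 2) * m = 3 / sqrt 2 * X"
      unfolding X_def r by simp
    moreover have "3 / sqrt 2 * X = 3/2 * sqrt 2 * X" by (simp only: inv)
    ultimately show ?thesis by linarith
  qed
qed

lemma feas_comp:
  fixes x :: "real^'n"
  assumes "x \<in> feasible CM"
  shows "0 \<le> x $ i" "x $ i \<le> CM"
proof -
  have nn: "\<forall>j. 0 \<le> x $ j" and s: "(\<Sum>j\<in>UNIV. x $ j) \<le> CM" using assms by (auto simp: feasible_def)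
  have "x $ i \<le> (\<Sum>j\<in>UNIV. x $ j)" by (rule member_le_sum) (use nn in auto)
  then show "0 \<le> x $ i" "x $ i \<le> CM" using nn s by auto
qed

lemma feas_sq:
  fixes x :: "real^'n"
  assumes "x \<in> feasible CM"
  shows "(\<Sum>i\<in>UNIV. x $ i * x $ i) \<le> CM * CM"
proof -
  have nn: "\<forall>j. 0 \<le> x $ j" and s: "(\<Sum>j\<in>UNIV. x $ j) \<le> CM" using assms by (auto simp: feasible_def)
  have "(\<Sum>i\<in>UNIV. x $ i * x $ i) \<le> (\<Sum>i\<in>UNIV. CM * x $ i)"
  proof (rule sum_mono)
    fix i
    have "x $ i * x $ i \<le> CM * x $ i"
      using feas_comp[OF assms, of i] by (intro mult_right_mono) auto
    then show "x $ i * x $ i \<le> CM * x $ i" .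
  qed
  also have "\<dots> = CM * (\<Sum>i\<in>UNIV. x $ i)" by (simp add: sum_distrib_left)
  also have "\<dots> \<le> CM * CM"
  proof (rule mult_left_mono[OF s])
    show "0 \<le> CM" using feas_comp[OF assms] by (meson order_trans)
  qed
  finally show ?thesis .
qed

lemma diamL:
  fixes x y :: "real^'n" and CM D :: real
  assumes x: "x \<in> feasible CM" and y: "y \<in> feasible CM"
    and D_def: "D = (if CARD('n) = 1 then CM else sqrt 2 * CM)"
  shows "(y - x) \<bullet> (y - x) \<le> D\<^sup>2"
proof -
  have e: "(y - x) \<bullet> (y - x) = (\<Sum>i\<in>UNIV. (y $ i - x $ i) * (y $ i - x $ i))" by (simp add: inner_vec_def)
  show ?thesis
  proof (cases "CARD('n) = 1")
    case True
    obtain i0 :: 'n where U: "UNIV = {i0}" by (metis card_1_singletonE[OF True])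
    have "\<bar>y $ i0 - x $ i0\<bar> \<le> CM" using feas_comp[OF x, of i0] feas_comp[OF y, of i0] by linarith
    hence a: "\<bar>y $ i0 - x $ i0\<bar> * \<bar>y $ i0 - x $ i0\<bar> \<le> CM * CM" by (intro mult_mono) auto
    have b: "(y - x) \<bullet> (y - x) = (y $ i0 - x $ i0) * (y $ i0 - x $ i0)" unfolding e U by simp
    have c: "D\<^sup>2 = CM * CM" using True unfolding D_def by (simp add: power2_eq_square)
    show ?thesis using a unfolding b c abs_mult_self_eq .
  next
    case False
    have "(\<Sum>i\<in>UNIV. (y $ i - x $ i) * (y $ i - x $ i)) \<le> (\<Sum>i\<in>UNIV. y $ i * y $ i + x $ i * x $ i)"
    proof (rule sum_mono)
      fix i
      have "0 \<le> y $ i * x $ i" using feas_comp[OF x, of i] feas_comp[OF y, of i] by simp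
      then show "(y $ i - x $ i) * (y $ i - x $ i) \<le> y $ i * y $ i + x $ i * x $ i"
        by (simp add: algebra_simps)
    qed
    also have "\<dots> = (\<Sum>i\<in>UNIV. y $ i * y $ i) + (\<Sum>i\<in>UNIV. x $ i * x $ i)" by (rule sum.distrib)
    also have "\<dots> \<le> CM * CM + CM * CM" by (rule add_mono[OF feas_sq[OF y] feas_sq[OF x]])
    also have "\<dots> = D\<^sup>2" unfolding D_def using False by (simp add: power_mult_distrib power2_eq_square)
    finally show ?thesis unfolding e .
  qed
qed

lemma idU:
  fixes u g :: "'a::real_inner" and \<eta> :: real
  shows "(u - \<eta> *\<^sub>R g) \<bullet> (u - \<eta> *\<^sub>R g) = u \<bullet> u - 2 * \<eta> * (g \<bullet> u) + \<eta> * \<eta> * (g \<bullet> g)"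
proof -
  have "(u - \<eta> *\<^sub>R g) \<bullet> (u - \<eta> *\<^sub>R g) = u \<bullet> u - u \<bullet> (\<eta> *\<^sub>R g) - (\<eta> *\<^sub>R g) \<bullet> u + (\<eta> *\<^sub>R g) \<bullet> (\<eta> *\<^sub>R g)"
    by (simp only: inner_diff_left inner_diff_right diff_diff_eq2 diff_add_eq add_diff_eq) 
  also have "\<dots> = u \<bullet> u - \<eta> * (u \<bullet> g) - \<eta> * (g \<bullet> u) + \<eta> * \<eta> * (g \<bullet> g)"
    by (simp only: inner_scaleR_left inner_scaleR_right mult.assoc)
  also have "u \<bullet> g = g \<bullet> u" by (rule inner_commute)
  finally show ?thesis by simp
qed

lemma idL:
  fixes c x g :: "'a::real_inner" and \<eta> :: real
  shows "(c - \<eta> *\<^sub>R g - x) \<bullet> (c - \<eta> *\<^sub>R g - x) = (c - x) \<bullet> (c - x) - 2 * \<eta> * (g \<bullet> (c - x)) + \<eta> * \<eta> * (g \<bullet> g)"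
proof -
  have eq: "c - \<eta> *\<^sub>R g - x = (c - x) - \<eta> *\<^sub>R g" by (simp add: algebra_simps)
  show ?thesis unfolding eq by (rule idU)
qed

lemma arithL:
  fixes a d e gg G D s :: real
  assumes G0: "0 < G" and D0: "0 < D" and s0: "0 < s" and gg: "gg \<le> G\<^sup>2"
    and id: "e = d - 2 * (D / (G * s)) * a + (D / (G * s)) * (D / (G * s)) * gg"
  shows "a \<le> G / (2 * D) * (s * (d - e)) + D * G / 2 * (1 / s)"
proof -
  define h where "h = D / (G * s)"
  have h0: "0 < h" unfolding h_def using G0 D0 s0 by simp
  have id': "e = d - 2 * h * a + h * h * gg" using id unfolding h_def .
  have a_eq: "a = (d - e) / (2 * h) + h * gg / 2" using h0 id' by (simp add: field_simps)
  have a1: "(d - e) / (2 * h) = G / (2 * D) * (s * (d - e))"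
    unfolding h_def using G0 D0 s0 by (simp add: field_simps)
  have "h * gg / 2 \<le> h * G\<^sup>2 / 2" using gg h0 by simp
  also have "h * G\<^sup>2 / 2 = D * G / 2 * (1 / s)"
    unfolding h_def using G0 D0 s0 by (simp add: field_simps power2_eq_square)
  finally have a2: "h * gg / 2 \<le> D * G / 2 * (1 / s)" .
  show ?thesis using a_eq a1 a2 by linarith
qed

lemma finL:
  fixes G D sT :: real
  assumes "0 < D"
  shows "G / (2 * D) * (D\<^sup>2 * sT) + D * G / 2 * (2 * sT) = 3/2 * G * D * sT"
  using assms by (simp add: field_simps power2_eq_square)

theorem theorem5:
  fixes K T :: nat and cM :: "nat \<Rightarrow> real" and rmax pmax :: real
    and r :: "nat \<Rightarrow> nat \<Rightarrow> real"
    and p eps :: "nat \<Rightarrow> real^'n"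
    and c :: "nat \<Rightarrow> real^'n"
    and CM D G :: real
  defines "CM \<equiv> (\<Sum>k=1..K. cM k)"
    and "D \<equiv> (if CARD('n) = 1 then CM else sqrt 2 * CM)"
    and "G \<equiv> sqrt (real CARD('n)) * max rmax pmax"
  assumes K: "K \<ge> 1" and T: "T \<ge> 1"
    and cM_pos: "\<forall>k\<in>{1..K}. cM k > 0"
    and r_bd: "\<forall>t\<in>{1..T}. \<forall>k\<in>{1..K}. 0 \<le> r t k \<and> r t k \<le> rmax"
    and r_mono: "\<forall>t\<in>{1..T}. \<forall>k j. 1 \<le> k \<and> k < j \<and> j \<le> K \<longrightarrow> r t k < r t j"
    and p_bd: "\<forall>t\<in>{1..T}. \<forall>i. 0 \<le> p t $ i \<and> p t $ i < pmax"
    and eps_bd: "\<forall>t\<in>{1..T}. \<forall>i. 0 \<le> eps t $ i \<and> eps t $ i \<le> 1"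
    and c1: "c 1 \<in> feasible CM"
    and step: "\<forall>t\<in>{1..<T}. c (Suc t) = closest_point (feasible CM)
                 (c t - (D / (G * sqrt (real t))) *\<^sub>R subgrad cM (r t) (eps t) (p t) (c t))"
  shows "(\<Sum>t=1..T. cost cM (r t) (eps t) (p t) (c t))
           - (INF x\<in>feasible CM. \<Sum>t=1..T. cost cM (r t) (eps t) (p t) x)
           \<le> 3/2 * G * D * sqrt (real T)
       \<and> 3/2 * G * D * sqrt (real T) \<le> 3 * CM * sqrt (real T * real CARD('n) / 2) * max rmax pmax"
  proof -
  define m where "m = max rmax pmax"
  define N where "N = real CARD('n)"
  define F where "F = (feasible CM :: (real^'n) set)"
  define g where "g t = subgrad cM (r t) (eps t) (p t) (c t)" for t
  define \<eta> where "\<eta> t = D / (G * sqrt (real t))" for t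
  have "0 \<le> r 1 1 \<and> r 1 1 \<le> rmax" using r_bd K T by simp
  hence rmax0: "0 \<le> rmax" by linarith
  have "0 \<le> p 1 $ i \<and> p 1 $ i < pmax" for i using p_bd T by simp
  hence pmax0: "0 < pmax" by (meson le_less_trans)
  have m0: "0 < m" unfolding m_def using pmax0 by simp
  have N1: "N \<ge> 1" unfolding N_def by (simp add: Suc_leI)
  have G0: "0 < G" unfolding G_def using m0 N1 m_def by simp
  have CM0: "0 < CM" unfolding CM_def using K cM_pos by (intro sum_pos) auto
  have D0: "0 < D" unfolding D_def using CM0 by simp
  have Fne: "F \<noteq> {}" using c1 F_def by auto
  have Fcl: "closed F" unfolding F_def by (rule feasible_closed)
  have Fcv: "convex F" unfolding F_def by (rule feasible_convex)
  have cF: "c t \<in> F" if "1 \<le> t" "t \<le> T" for t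
    using that
  proof (induction t)
    case 0 then show ?case by simp
  next
    case (Suc n)
    show ?case
    proof (cases "n = 0")
      case True then show ?thesis using c1 F_def by simp
    next
      case False
      then have "n \<in> {1..<T}" using Suc by simp
      then show ?thesis using step closest_point_in_set[OF Fcl Fne] F_def by simp
    qed
  qed
  have gbd: "g t \<bullet> g t \<le> G\<^sup>2" if "1 \<le> t" "t \<le> T" for t
  proof -
    have ct: "c t \<in> feasible (\<Sum>k=1..K. cM k)" using cF[OF that] F_def CM_def by simp
    have epst: "\<forall>i. 0 \<le> eps t $ i \<and> eps t $ i \<le> 1" using eps_bd that by simp
    define q where "q = crit cM (eps t) (c t)"
    have q: "1 \<le> q" "q \<le> K" using crit_props[OF K feas_s[OF ct epst]] q_def by auto
    have rq: "0 \<le> r t q" "r t q \<le> rmax" using r_bd q that by auto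
    have gi: "g t $ i * g t $ i \<le> m * m" for i
    proof -
      have gi_def: "g t $ i = r t q * eps t $ i - p t $ i" unfolding g_def subgrad_def q_def by simp
      have "0 \<le> r t q * eps t $ i" using rq epst by simp
      moreover have "r t q * eps t $ i \<le> rmax" using rq epst mult_left_le[of "eps t $ i" "r t q"] by simp
      moreover have "0 \<le> p t $ i" "p t $ i < pmax" using p_bd that by auto
      ultimately have "\<bar>g t $ i\<bar> \<le> m" unfolding gi_def m_def by auto
      hence "\<bar>g t $ i\<bar> * \<bar>g t $ i\<bar> \<le> m * m" by (intro mult_mono) auto
      thus ?thesis by (simp add: abs_mult_self_eq)
    qed
    have "g t \<bullet> g t = (\<Sum>i\<in>UNIV. g t $ i * g t $ i)" by (simp add: inner_vec_def)
    also have "\<dots> \<le> (\<Sum>i\<in>(UNIV::'n set). m * m)" by (intro sum_mono gi)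
    also have "\<dots> = N * m * m" by (simp add: N_def)
    also have "\<dots> = G\<^sup>2" unfolding G_def m_def N_def by (simp add: power_mult_distrib power2_eq_square)
    finally show ?thesis .
  qed
  have diam: "(y - x) \<bullet> (y - x) \<le> D\<^sup>2" if "x \<in> F" "y \<in> F" for x y
    using diamL[of x CM y D] that F_def D_def by simp
  define B where "B = 3/2 * G * D * sqrt (real T)"
  have main: "(\<Sum>t=1..T. cost cM (r t) (eps t) (p t) (c t)) - B \<le> (\<Sum>t=1..T. cost cM (r t) (eps t) (p t) x)"
    if xF: "x \<in> F" for x
  proof -
    define d where "d t = (c t - x) \<bullet> (c t - x)" for t
    define e where "e t = (c t - \<eta> t *\<^sub>R g t - x) \<bullet> (c t - \<eta> t *\<^sub>R g t - x)" for t
    have pert: "cost cM (r t) (eps t) (p t) (c t) - cost cM (r t) (eps t) (p t) x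
        \<le> G / (2 * D) * (sqrt (real t) * (d t - e t)) + D * G / 2 * (1 / sqrt (real t))"
      if t: "1 \<le> t" "t \<le> T" for t
    proof -
      have ct: "c t \<in> feasible (\<Sum>k=1..K. cM k)" using cF[OF t] F_def CM_def by simp
      have xf: "x \<in> feasible (\<Sum>k=1..K. cM k)" using xF F_def CM_def by simp
      have epst: "\<forall>i. 0 \<le> eps t $ i \<and> eps t $ i \<le> 1" using eps_bd t by simp
      have rm: "\<forall>k j. 1 \<le> k \<and> k < j \<and> j \<le> K \<longrightarrow> r t k < r t j" using r_mono t by simp
      have sg: "cost cM (r t) (eps t) (p t) (c t) + g t \<bullet> (x - c t) \<le> cost cM (r t) (eps t) (p t) x"
        unfolding g_def by (rule subgrad_ineq[OF K cM_pos rm epst xf ct])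
      have st: "0 < sqrt (real t)" using t by simp
      have id: "e t = d t - 2 * (D / (G * sqrt (real t))) * (g t \<bullet> (c t - x)) + (D / (G * sqrt (real t))) * (D / (G * sqrt (real t))) * (g t \<bullet> g t)"
        unfolding e_def d_def \<eta>_def by (rule idL)
      have a: "g t \<bullet> (c t - x) \<le> G / (2 * D) * (sqrt (real t) * (d t - e t)) + D * G / 2 * (1 / sqrt (real t))"
        by (rule arithL[OF G0 D0 st gbd[OF t] id])
      have "g t \<bullet> (x - c t) = - (g t \<bullet> (c t - x))" by (metis inner_minus_right minus_diff_eq)
      then show ?thesis using sg a by linarith
    qed
    have dM: "\<forall>t\<in>{1..T}. d t \<le> D\<^sup>2" unfolding d_def using diam cF xF by auto
    have e0: "\<forall>t\<in>{1..T}. 0 \<le> e t" unfolding e_def by simp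
    have de: "\<forall>t. 1 \<le> t \<and> t < T \<longrightarrow> d (Suc t) \<le> e t"
    proof (intro allI impI)
      fix t assume t: "1 \<le> t \<and> t < T"
      let ?y = "c t - \<eta> t *\<^sub>R g t"
      have cs: "c (Suc t) = closest_point F ?y" using step t F_def g_def \<eta>_def by simp
      have "dist (closest_point F ?y) (closest_point F x) \<le> dist ?y x"
        by (rule closest_point_lipschitz[OF Fcv Fcl Fne])
      hence "norm (c (Suc t) - x) \<le> norm (?y - x)"
        using closest_point_self[OF xF] cs by (simp add: dist_norm)
      hence "(norm (c (Suc t) - x))\<^sup>2 \<le> (norm (?y - x))\<^sup>2" by (intro power_mono) auto
      thus "d (Suc t) \<le> e t" unfolding d_def e_def by (simp add: power2_norm_eq_inner)
    qed
    have T1: "(\<Sum>t=1..T. sqrt (real t) * (d t - e t)) \<le> D\<^sup>2 * sqrt (real T)"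
      by (rule tele[OF dM e0 de])
    have T2: "(\<Sum>t=1..T. 1 / sqrt (real t)) \<le> 2 * sqrt (real T)" by (rule sum_inv_sqrt)
    have "(\<Sum>t=1..T. cost cM (r t) (eps t) (p t) (c t)) - (\<Sum>t=1..T. cost cM (r t) (eps t) (p t) x)
        = (\<Sum>t=1..T. cost cM (r t) (eps t) (p t) (c t) - cost cM (r t) (eps t) (p t) x)"
      by (simp add: sum_subtractf)
    also have "\<dots> \<le> (\<Sum>t=1..T. G / (2 * D) * (sqrt (real t) * (d t - e t)) + D * G / 2 * (1 / sqrt (real t)))"
      by (intro sum_mono pert) auto
    also have "\<dots> = G / (2 * D) * (\<Sum>t=1..T. sqrt (real t) * (d t - e t)) + D * G / 2 * (\<Sum>t=1..T. 1 / sqrt (real t))"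
      by (simp add: sum.distrib sum_distrib_left)
    also have "\<dots> \<le> G / (2 * D) * (D\<^sup>2 * sqrt (real T)) + D * G / 2 * (2 * sqrt (real T))"
      using G0 D0 by (intro add_mono mult_left_mono T1 T2) auto
    also have "\<dots> = B" unfolding B_def by (rule finL[OF D0])
    finally show ?thesis by linarith
  qed
  have P1: "(\<Sum>t=1..T. cost cM (r t) (eps t) (p t) (c t)) - B
      \<le> (INF x\<in>feasible CM. \<Sum>t=1..T. cost cM (r t) (eps t) (p t) x)"
    using Fne main unfolding F_def by (intro cINF_greatest) auto
  have P2: "3/2 * G * D * sqrt (real T) \<le> 3 * CM * sqrt (real T * real CARD('n) / 2) * max rmax pmax"
    using p2[OF m0 CM0, of "CARD('n)" T] unfolding G_def D_def m_def .
  show ?thesis using P1 P2 unfolding B_def by linarith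
qed

end
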